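(* Let $r_0>0$ and $0<a<2r_0$, and let $\mathbf{x}_1,\dots,\mathbf{x}_n$ be i.i.d. uniformly distributed on the annulus $\{\mathbf{x}\in\mathbb{R}^2: r_0-a/2\le\|\mathbf{x}\|\le r_0+a/2\}$. Fix $\delta>0$ and $p\in(0,1]$, and set $\delta_n=\delta\, r_0\sqrt{\log n/n}$. Let $S=\{(i,j)\in[n]\times[n]: i\neq j,\ \|\mathbf{x}_i-\mathbf{x}_j\|\le\delta_n\}$ and define $\bar{\mathbf{D}}^s\in\mathbb{R}^{n\times n}$ by $\bar{\mathbf{D}}^s_{i,j}=\|\mathbf{x}_i-\mathbf{x}_j\|^2$ if $(i,j)\in S$ and $\bar{\mathbf{D}}^s_{i,j}=0$ otherwise. Let $E\subseteq[n]\times[n]$ be a random set, independent of the positions, containing each index pair $(i,j)$ independently with probability $p$, and let $\mathcal{P}_E(\mathbf{M})_{i,j}=\mathbf{M}_{i,j}$ for $(i,j)\in E$ and $0$ otherwise. Then there exists a constant $c$ (independent of $n$) such that, for all sufficiently large $n$, with probability at least $1-n^{-3}$, $$\|\mathcal{P}_E(\bar{\mathbf{D}}^s)\|_2\le c\,\delta^3(r_0+a)^2\Big(\sqrt{\tfrac{\log n}{n}}\Big)^3 p\,n .$$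
   Context: $\|\cdot\|_2$ denotes the spectral (operator) norm of a matrix; $[n]=\{1,\dots,n\}$. *)

theory Defs
  imports "HOL-Probability.Probability"
begin

definition spec_norm :: "nat \<Rightarrow> (nat \<Rightarrow> nat \<Rightarrow> real) \<Rightarrow> real" where
  "spec_norm n M = (SUP v \<in> {v :: nat \<Rightarrow> real. (\<Sum>j<n. (v j)\<^sup>2) \<le> 1}.
       sqrt (\<Sum>i<n. (\<Sum>j<n. M i j * v j)\<^sup>2))"

definition annulus :: "real \<Rightarrow> real \<Rightarrow> (real^2) set" where
  "annulus r0 a = {x. r0 - a/2 \<le> norm x \<and> norm x \<le> r0 + a/2}"

definition delta_n :: "real \<Rightarrow> real \<Rightarrow> nat \<Rightarrow> real" where
  "delta_n \<delta> r0 n = \<delta> * r0 * sqrt (ln (real n) / real n)"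

definition Dbar_s :: "real \<Rightarrow> (nat \<Rightarrow> real^2) \<Rightarrow> nat \<Rightarrow> nat \<Rightarrow> real" where
  "Dbar_s dn x i j = (if i \<noteq> j \<and> norm (x i - x j) \<le> dn then (norm (x i - x j))\<^sup>2 else 0)"

definition P_E :: "(nat \<times> nat \<Rightarrow> bool) \<Rightarrow> (nat \<Rightarrow> nat \<Rightarrow> real) \<Rightarrow> nat \<Rightarrow> nat \<Rightarrow> real" where
  "P_E E M i j = (if E (i, j) then M i j else 0)"

text \<open>Joint law: n i.i.d. uniform points on the annulus, independent of the random
  set E containing each pair (i,j) in [n]x[n] independently with probability p.\<close>
definition model :: "real \<Rightarrow> real \<Rightarrow> real \<Rightarrow> nat \<Rightarrow>
    ((nat \<Rightarrow> real^2) \<times> (nat \<times> nat \<Rightarrow> bool)) measure" where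
  "model r0 a p n =
     (PiM {..<n} (\<lambda>_. uniform_measure lborel (annulus r0 a)))
     \<Otimes>\<^sub>M (PiM ({..<n} \<times> {..<n}) (\<lambda>_. measure_pmf (bernoulli_pmf p)))"

end

theory Submission
  imports Defs "HOL-Real_Asymp.Real_Asymp"
begin

lemma sum_ind_card:
  "(\<Sum>j<(n::nat). (if P j then 1 else 0::real)) = real (card {j. j<n \<and> P j})"
proof -
  have e: "{x\<in>{..<n}. P x} = {j. j<n \<and> P j}" by auto
  have h: "(\<Sum>j\<in>{x\<in>{..<n}. P x}. 1::real) = (\<Sum>j<n. (if P j then 1 else 0::real))"
    by (rule sum.inter_filter[OF finite_lessThan])
  show ?thesis using h real_of_card[of "{j. j<n \<and> P j}"] unfolding e by linarith
qed

lemma row_bound: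
  fixes M :: "nat \<Rightarrow> nat \<Rightarrow> real"
  assumes b: "b \<ge> 0"
    and M: "\<And>j. j<n \<Longrightarrow> \<bar>M i j\<bar> \<le> (if Nr i j then b else 0)"
    and d: "real (card {j. j<n \<and> Nr i j}) \<le> d"
  shows "(\<Sum>j<n. M i j * v j)\<^sup>2 \<le> d * b\<^sup>2 * (\<Sum>j<n. (if Nr i j then 1 else 0) * (v j)\<^sup>2)"
proof -
  let ?c = "\<lambda>j. (if Nr i j then 1 else 0::real)"
  have "\<bar>\<Sum>j<n. M i j * v j\<bar> \<le> (\<Sum>j<n. \<bar>M i j * v j\<bar>)" by (rule sum_abs)
  also have "\<dots> \<le> (\<Sum>j<n. ?c j * (b * \<bar>v j\<bar>))"
  proof (rule sum_mono)
    fix j assume "j \<in> {..<n}"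
    then have h: "\<bar>M i j\<bar> \<le> (if Nr i j then b else 0)" using M by auto
    show "\<bar>M i j * v j\<bar> \<le> ?c j * (b * \<bar>v j\<bar>)"
      using mult_right_mono[OF h, of "\<bar>v j\<bar>"] by (auto simp: abs_mult split: if_splits)
  qed
  finally have 1: "\<bar>\<Sum>j<n. M i j * v j\<bar> \<le> (\<Sum>j<n. ?c j * (b * \<bar>v j\<bar>))" .
  have "(\<Sum>j<n. M i j * v j)\<^sup>2 = \<bar>\<Sum>j<n. M i j * v j\<bar>\<^sup>2" by simp
  also have "\<dots> \<le> (\<Sum>j<n. ?c j * (b * \<bar>v j\<bar>))\<^sup>2"
    by (rule power_mono[OF 1]) simp
  also have "\<dots> = (\<Sum>j<n. ?c j * (?c j * b * \<bar>v j\<bar>))\<^sup>2"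
    by (intro arg_cong[where f="\<lambda>x. x\<^sup>2"] sum.cong) auto
  also have "\<dots> \<le> (\<Sum>j<n. (?c j)\<^sup>2) * (\<Sum>j<n. (?c j * b * \<bar>v j\<bar>)\<^sup>2)"
    by (rule Cauchy_Schwarz_ineq_sum)
  also have "(\<Sum>j<n. (?c j)\<^sup>2) = (\<Sum>j<n. ?c j)"
    by (intro sum.cong) auto
  also have "\<dots> = real (card {j. j<n \<and> Nr i j})" by (rule sum_ind_card)
  also have "(\<Sum>j<n. (?c j * b * \<bar>v j\<bar>)\<^sup>2) = b\<^sup>2 * (\<Sum>j<n. ?c j * (v j)\<^sup>2)"
    by (auto simp: sum_distrib_left power_mult_distrib intro!: sum.cong)
  also have "real (card {j. j<n \<and> Nr i j}) * (b\<^sup>2 * (\<Sum>j<n. ?c j * (v j)\<^sup>2))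
     \<le> d * (b\<^sup>2 * (\<Sum>j<n. ?c j * (v j)\<^sup>2))"
    by (rule mult_right_mono[OF d]) (auto intro!: sum_nonneg mult_nonneg_nonneg)
  finally show ?thesis by (simp add: mult.assoc)
qed

lemma spec_bound:
  fixes M :: "nat \<Rightarrow> nat \<Rightarrow> real"
  assumes b: "b \<ge> 0" and d0: "d \<ge> 0"
    and M: "\<And>i j. i<n \<Longrightarrow> j<n \<Longrightarrow> \<bar>M i j\<bar> \<le> (if Nr i j then b else 0)"
    and dr: "\<And>i. i<n \<Longrightarrow> real (card {j. j<n \<and> Nr i j}) \<le> d"
    and dc: "\<And>j. j<n \<Longrightarrow> real (card {i. i<n \<and> Nr i j}) \<le> d"
  shows "spec_norm n M \<le> b * d"
  unfolding spec_norm_def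
proof (rule cSUP_least)
  show "{v::nat\<Rightarrow>real. (\<Sum>j<n. (v j)\<^sup>2) \<le> 1} \<noteq> {}"
    by (auto intro!: exI[of _ "\<lambda>_. 0"])
next
  fix v :: "nat \<Rightarrow> real" assume "v \<in> {v. (\<Sum>j<n. (v j)\<^sup>2) \<le> 1}"
  then have v: "(\<Sum>j<n. (v j)\<^sup>2) \<le> 1" by simp
  let ?c = "\<lambda>i j. (if Nr i j then 1 else 0::real)"
  have "(\<Sum>i<n. (\<Sum>j<n. M i j * v j)\<^sup>2) \<le> (\<Sum>i<n. d * b\<^sup>2 * (\<Sum>j<n. ?c i j * (v j)\<^sup>2))"
    by (rule sum_mono, rule row_bound[OF b]) (use M dr in auto)
  also have "\<dots> = d * b\<^sup>2 * (\<Sum>j<n. (v j)\<^sup>2 * (\<Sum>i<n. ?c i j))"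
  proof -
    have "(\<Sum>i<n. d * b\<^sup>2 * (\<Sum>j<n. ?c i j * (v j)\<^sup>2)) = d * b\<^sup>2 * (\<Sum>i<n. \<Sum>j<n. ?c i j * (v j)\<^sup>2)"
      by (rule sum_distrib_left[symmetric])
    also have "(\<Sum>i<n. \<Sum>j<n. ?c i j * (v j)\<^sup>2) = (\<Sum>j<n. \<Sum>i<n. ?c i j * (v j)\<^sup>2)"
      by (rule sum.swap)
    also have "\<dots> = (\<Sum>j<n. (v j)\<^sup>2 * (\<Sum>i<n. ?c i j))"
      by (rule sum.cong[OF refl]) (simp add: sum_distrib_left mult.commute)
    finally show ?thesis .
  qed
  also have "\<dots> \<le> d * b\<^sup>2 * (\<Sum>j<n. (v j)\<^sup>2 * d)"
  proof -
    have "(\<Sum>j<n. (v j)\<^sup>2 * (\<Sum>i<n. ?c i j)) \<le> (\<Sum>j<n. (v j)\<^sup>2 * d)"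
    proof (rule sum_mono)
      fix j assume "j \<in> {..<n}"
      then have "(\<Sum>i<n. ?c i j) \<le> d" using dc[of j] by (simp add: sum_ind_card)
      then show "(v j)\<^sup>2 * (\<Sum>i<n. ?c i j) \<le> (v j)\<^sup>2 * d"
        by (intro mult_left_mono) auto
    qed
    then show ?thesis using d0 by (intro mult_left_mono) auto
  qed
  also have "\<dots> = (b * d)\<^sup>2 * (\<Sum>j<n. (v j)\<^sup>2)"
    by (simp add: sum_distrib_right[symmetric] sum_distrib_left[symmetric] power2_eq_square mult_ac)
  also have "\<dots> \<le> (b * d)\<^sup>2" using v by (simp add: mult_left_le)
  finally have "(\<Sum>i<n. (\<Sum>j<n. M i j * v j)\<^sup>2) \<le> (b * d)\<^sup>2" .
  then show "sqrt (\<Sum>i<n. (\<Sum>j<n. M i j * v j)\<^sup>2) \<le> b * d"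
    using b d0 real_sqrt_le_mono[of _ "(b*d)\<^sup>2"] by simp
qed

definition gfun :: "nat \<Rightarrow> (nat \<Rightarrow> real) \<Rightarrow> (nat \<Rightarrow> nat \<Rightarrow> real) \<Rightarrow> real" where
  "gfun n w M = sqrt (\<Sum>i<n. (\<Sum>j<n. M i j * w j)\<^sup>2)"

definition Vset :: "nat \<Rightarrow> (nat \<Rightarrow> real) set" where
  "Vset n = {w. (\<forall>j. w j \<in> \<rat>) \<and> (\<forall>j. j \<ge> n \<longrightarrow> w j = 0) \<and> (\<Sum>j<n. (w j)\<^sup>2) \<le> 1}"

lemma countable_Vset: "countable (Vset n)"
proof -
  have "Vset n \<subseteq> (\<lambda>f j. if j<n then f j else 0) ` PiE {..<n} (\<lambda>_. \<rat>)"
  proof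
    fix w assume w: "w \<in> Vset n"
    have "w = (\<lambda>j. if j<n then restrict w {..<n} j else 0)"
      using w by (auto simp: Vset_def fun_eq_iff)
    moreover have "restrict w {..<n} \<in> PiE {..<n} (\<lambda>_. \<rat>)" using w by (auto simp: Vset_def)
    ultimately show "w \<in> (\<lambda>f j. if j<n then f j else 0) ` PiE {..<n} (\<lambda>_. \<rat>)" by blast
  qed
  moreover have "countable (PiE {..<n} (\<lambda>_. \<rat>::real set))"
    by (intro countable_PiE) (auto intro: countable_rat)
  ultimately show ?thesis by (meson countable_image countable_subset)
qed

definition trn :: "nat \<Rightarrow> real \<Rightarrow> real" where
  "trn k x = (if x \<ge> 0 then of_int \<lfloor>x * real (Suc k)\<rfloor> / real (Suc k)
              else of_int \<lceil>x * real (Suc k)\<rceil> / real (Suc k))"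

lemma trn_rat: "trn k x \<in> \<rat>"
  unfolding trn_def by (auto intro!: Rats_divide)

lemma trn_abs: "\<bar>trn k x\<bar> \<le> \<bar>x\<bar>"
proof -
  have p: "0 < real (Suc k)" by simp
  show ?thesis
  proof (cases "x \<ge> 0")
    case True
    have "of_int \<lfloor>x * real (Suc k)\<rfloor> \<le> x * real (Suc k)" by simp
    moreover have "0 \<le> x * real (Suc k)" using True by simp
    then have "0 \<le> (of_int \<lfloor>x * real (Suc k)\<rfloor> :: real)" by simp
    ultimately show ?thesis using True p by (simp add: trn_def divide_le_eq)
  next
    case False
    have "x * real (Suc k) \<le> of_int \<lceil>x * real (Suc k)\<rceil>" by simp
    moreover have "of_int \<lceil>x * real (Suc k)\<rceil> \<le> (0::real)" using False
      by (simp add: ceiling_le_iff mult_nonpos_nonneg) 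
    ultimately have c: "\<bar>(of_int \<lceil>x * real (Suc k)\<rceil> :: real)\<bar> \<le> \<bar>x * real (Suc k)\<bar>"
      by linarith
    have "\<bar>trn k x\<bar> = \<bar>(of_int \<lceil>x * real (Suc k)\<rceil> :: real)\<bar> / real (Suc k)"
      using False by (simp add: trn_def abs_divide)
    also have "\<dots> \<le> \<bar>x * real (Suc k)\<bar> / real (Suc k)"
      by (rule divide_right_mono[OF c]) simp
    also have "\<dots> = \<bar>x\<bar>" by (simp add: abs_mult)
    finally show ?thesis .
  qed
qed

lemma trn_close: "\<bar>trn k x - x\<bar> \<le> 1 / real (Suc k)"
proof -
  have p: "0 < real (Suc k)" by simp
  have a: "\<bar>of_int \<lfloor>x * real (Suc k)\<rfloor> - x * real (Suc k)\<bar> \<le> 1"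
    using of_int_floor_le[of "x * real (Suc k)"] real_of_int_floor_gt_diff_one[of "x * real (Suc k)"] by linarith
  have b: "\<bar>of_int \<lceil>x * real (Suc k)\<rceil> - x * real (Suc k)\<bar> \<le> 1"
    using le_of_int_ceiling[of "x * real (Suc k)"] of_int_ceiling_diff_one_le[of "x * real (Suc k)"] by linarith
  have "trn k x - x = (if x \<ge> 0 then (of_int \<lfloor>x * real (Suc k)\<rfloor> - x * real (Suc k)) / real (Suc k)
         else (of_int \<lceil>x * real (Suc k)\<rceil> - x * real (Suc k)) / real (Suc k))"
    using p by (simp add: trn_def field_simps)
  then show ?thesis using a b p by (auto simp: abs_divide divide_right_mono)
qed

lemma trn_tendsto: "(\<lambda>k. trn k x) \<longlonglongrightarrow> x"
proof -
  have z: "(\<lambda>k. 1 / real (Suc k)) \<longlonglongrightarrow> 0"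
    using LIMSEQ_Suc[OF lim_const_over_n[of 1]] by simp
  have "(\<lambda>k. trn k x - x) \<longlonglongrightarrow> 0"
    by (rule Lim_null_comparison[OF _ z]) (rule always_eventually, auto simp only: real_norm_def trn_close)
  then show ?thesis by (simp add: LIM_zero_iff)
qed

lemma spec_le_iff:
  assumes t: "t \<ge> 0"
  shows "spec_norm n M \<le> t \<longleftrightarrow> (\<forall>w\<in>Vset n. gfun n w M \<le> t)"
proof
  have bdd: "bdd_above ((\<lambda>v. gfun n v M) ` {v. (\<Sum>j<n. (v j)\<^sup>2) \<le> 1})"
  proof -
    { fix v :: "nat \<Rightarrow> real" assume v: "(\<Sum>j<n. (v j)\<^sup>2) \<le> 1"
      have "gfun n v M \<le> sqrt (\<Sum>i<n. (\<Sum>j<n. (M i j)\<^sup>2))"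
        unfolding gfun_def
      proof (rule real_sqrt_le_mono, rule sum_mono)
        fix i assume "i \<in> {..<n}"
        have "(\<Sum>j<n. M i j * v j)\<^sup>2 \<le> (\<Sum>j<n. (M i j)\<^sup>2) * (\<Sum>j<n. (v j)\<^sup>2)"
          by (rule Cauchy_Schwarz_ineq_sum)
        also have "\<dots> \<le> (\<Sum>j<n. (M i j)\<^sup>2)"
          using v by (simp add: mult_left_le sum_nonneg)
        finally show "(\<Sum>j<n. M i j * v j)\<^sup>2 \<le> (\<Sum>j<n. (M i j)\<^sup>2)" .
      qed }
    then show ?thesis by (auto intro!: bdd_aboveI)
  qed
  assume "spec_norm n M \<le> t"
  then show "\<forall>w\<in>Vset n. gfun n w M \<le> t"
    unfolding spec_norm_def
    using cSUP_upper[OF _ bdd, unfolded gfun_def] by (force simp: Vset_def gfun_def)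
next
  assume H: "\<forall>w\<in>Vset n. gfun n w M \<le> t"
  show "spec_norm n M \<le> t"
    unfolding spec_norm_def
  proof (rule cSUP_least)
    show "{v::nat\<Rightarrow>real. (\<Sum>j<n. (v j)\<^sup>2) \<le> 1} \<noteq> {}"
      by (auto intro!: exI[of _ "\<lambda>_. 0"])
  next
    fix v :: "nat \<Rightarrow> real" assume "v \<in> {v. (\<Sum>j<n. (v j)\<^sup>2) \<le> 1}"
    then have v: "(\<Sum>j<n. (v j)\<^sup>2) \<le> 1" by simp
    define w where "w k j = (if j < n then trn k (v j) else 0)" for k j
    have wV: "w k \<in> Vset n" for k
    proof -
      have "(\<Sum>j<n. (w k j)\<^sup>2) \<le> (\<Sum>j<n. (v j)\<^sup>2)"
        by (rule sum_mono) (auto simp: w_def intro!: abs_le_square_iff[THEN iffD1] trn_abs)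
      then show ?thesis using v by (auto simp: Vset_def w_def trn_rat)
    qed
    have lim: "(\<lambda>k. gfun n (w k) M) \<longlonglongrightarrow> gfun n v M"
      unfolding gfun_def
    proof (intro tendsto_intros)
      fix i j assume "j \<in> {..<n}"
      then show "(\<lambda>k. w k j) \<longlonglongrightarrow> v j" by (simp add: w_def trn_tendsto)
    qed
    show "sqrt (\<Sum>i<n. (\<Sum>j<n. M i j * v j)\<^sup>2) \<le> t"
      using tendsto_le[OF _ tendsto_const lim] H wV by (auto simp: gfun_def)
  qed
qed

lemma meas_x:
  assumes "i < n"
  shows "(\<lambda>\<omega>. fst \<omega> i) \<in> borel_measurable (model r0 a p n)"
  unfolding model_def by measurable (use assms in auto)

lemma meas_E:
  assumes "i < n" "j < n"
  shows "(\<lambda>\<omega>. snd \<omega> (i,j)) \<in> measurable (model r0 a p n) (count_space UNIV)"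
proof -
  have "(\<lambda>\<omega>. snd \<omega> (i,j)) \<in> measurable (model r0 a p n) (measure_pmf (bernoulli_pmf p))"
    unfolding model_def by measurable (use assms in auto)
  then show ?thesis by (simp add: measurable_def)
qed

lemma meas_entry:
  assumes "i < n" "j < n"
  shows "(\<lambda>\<omega>. P_E (snd \<omega>) (Dbar_s dn (fst \<omega>)) i j) \<in> borel_measurable (model r0 a p n)"
proof -
  note [measurable] = meas_x[OF assms(1)] meas_x[OF assms(2)] meas_E[OF assms]
  show ?thesis unfolding P_E_def Dbar_s_def by measurable
qed

lemma meas_g:
  "(\<lambda>\<omega>. gfun n w (P_E (snd \<omega>) (Dbar_s dn (fst \<omega>)))) \<in> borel_measurable (model r0 a p n)"
  unfolding gfun_def
  apply (rule measurable_compose[OF _ borel_measurable_sqrt])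
  apply (rule borel_measurable_sum)
  apply (rule borel_measurable_power)
  apply (rule borel_measurable_sum)
  apply (rule borel_measurable_times)
   apply (rule meas_entry; simp)
  apply simp
  done

lemma sets_spec:
  assumes "t \<ge> 0"
  shows "{\<omega> \<in> space (model r0 a p n). spec_norm n (P_E (snd \<omega>) (Dbar_s dn (fst \<omega>))) \<le> t}
     \<in> sets (model r0 a p n)"
proof -
  have "{\<omega> \<in> space (model r0 a p n). spec_norm n (P_E (snd \<omega>) (Dbar_s dn (fst \<omega>))) \<le> t}
      = {\<omega> \<in> space (model r0 a p n). \<forall>w\<in>Vset n. gfun n w (P_E (snd \<omega>) (Dbar_s dn (fst \<omega>))) \<le> t}"
    using spec_le_iff[OF assms] by blast
  also have "\<dots> \<in> sets (model r0 a p n)"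
  proof (rule sets.sets_Collect_countable_All'[OF _ countable_Vset])
    fix w
    show "{\<omega> \<in> space (model r0 a p n). gfun n w (P_E (snd \<omega>) (Dbar_s dn (fst \<omega>))) \<le> t} \<in> sets (model r0 a p n)"
      using meas_g by measurable
  qed
  finally show ?thesis .
qed

definition cell :: "real \<Rightarrow> int \<times> int \<Rightarrow> (real^2) set" where
  "cell s k = cbox (\<chi> i. of_int (if i = 1 then fst k else snd k) * s)
                   (\<chi> i. (of_int (if i = 1 then fst k else snd k) + 1) * s)"

definition idx :: "real \<Rightarrow> real^2 \<Rightarrow> int \<times> int" where
  "idx s x = (\<lfloor>x$1 / s\<rfloor>, \<lfloor>x$2 / s\<rfloor>)"

definition Kset :: "int \<Rightarrow> (int \<times> int) set" where
  "Kset N = {-N..N} \<times> {-N..N}"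

lemma floor_div_bounds:
  fixes s t :: real
  assumes "s > 0"
  shows "of_int \<lfloor>t / s\<rfloor> * s \<le> t" "t \<le> (of_int \<lfloor>t / s\<rfloor> + 1) * s"
proof -
  have "of_int \<lfloor>t / s\<rfloor> \<le> t / s" by simp
  then show "of_int \<lfloor>t / s\<rfloor> * s \<le> t" using assms by (simp add: le_divide_eq)
  have "t / s \<le> of_int \<lfloor>t / s\<rfloor> + 1" by linarith
  then show "t \<le> (of_int \<lfloor>t / s\<rfloor> + 1) * s" using pos_divide_le_eq[OF assms] by blast
qed

lemma in_cell_idx:
  assumes "s > 0"
  shows "x \<in> cell s (idx s x)"
  unfolding cell_def idx_def mem_box_cart
proof
  fix i :: 2
  show "(\<chi> i. of_int (if i = 1 then fst (\<lfloor>x $ 1 / s\<rfloor>, \<lfloor>x $ 2 / s\<rfloor>) else snd (\<lfloor>x $ 1 / s\<rfloor>, \<lfloor>x $ 2 / s\<rfloor>)) * s) $ i \<le> x $ i \<and>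
         x $ i \<le> (\<chi> i. (of_int (if i = 1 then fst (\<lfloor>x $ 1 / s\<rfloor>, \<lfloor>x $ 2 / s\<rfloor>) else snd (\<lfloor>x $ 1 / s\<rfloor>, \<lfloor>x $ 2 / s\<rfloor>)) + 1) * s) $ i"
    using exhaust_2[of i] floor_div_bounds[OF assms, of "x$1"] floor_div_bounds[OF assms, of "x$2"]
    by auto
qed

lemma floor_range:
  fixes s t R :: real
  assumes "s > 0" "\<bar>t\<bar> \<le> R"
  shows "-\<lceil>R/s\<rceil> \<le> \<lfloor>t / s\<rfloor> \<and> \<lfloor>t / s\<rfloor> \<le> \<lceil>R/s\<rceil>"
proof -
  have l: "-R \<le> t" "t \<le> R" using assms by auto
  have "(-R)/s \<le> t/s" by (rule divide_right_mono[OF l(1)]) (use assms in linarith)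
  moreover have "t/s \<le> R/s" by (rule divide_right_mono[OF l(2)]) (use assms in linarith)
  ultimately have "\<lfloor>-R/s\<rfloor> \<le> \<lfloor>t / s\<rfloor>" "\<lfloor>t / s\<rfloor> \<le> \<lfloor>R/s\<rfloor>" by (auto intro: floor_mono)
  moreover have "\<lfloor>-R/s\<rfloor> = -\<lceil>R/s\<rceil>" by (simp add: ceiling_def)
  moreover have "\<lfloor>R/s\<rfloor> \<le> \<lceil>R/s\<rceil>" by (rule floor_le_ceiling)
  ultimately show ?thesis by linarith
qed

lemma idx_in_K:
  assumes "s > 0" "norm x \<le> R"
  shows "idx s x \<in> Kset \<lceil>R/s\<rceil>"
  using floor_range[OF assms(1), of "x$1" R] floor_range[OF assms(1), of "x$2" R]
    component_le_norm_cart[of x 1] component_le_norm_cart[of x 2] assms(2)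
  by (auto simp: idx_def Kset_def)

lemma floor_close:
  fixes s a b d :: real
  assumes "s > 0" "\<bar>a - b\<bar> \<le> d"
  shows "\<bar>\<lfloor>b/s\<rfloor> - \<lfloor>a/s\<rfloor>\<bar> \<le> \<lceil>d/s\<rceil>"
proof -
  have "b/s \<le> a/s + d/s" "a/s \<le> b/s + d/s" using assms
    by (auto simp: add_divide_distrib[symmetric] divide_right_mono)
  moreover have "of_int \<lfloor>b/s\<rfloor> \<le> b/s" "b/s < of_int \<lfloor>b/s\<rfloor> + 1"
    "of_int \<lfloor>a/s\<rfloor> \<le> a/s" "a/s < of_int \<lfloor>a/s\<rfloor> + 1" by linarith+
  moreover have "d/s \<le> of_int \<lceil>d/s\<rceil>" by simp
  ultimately have "(of_int \<lfloor>b/s\<rfloor> :: real) < of_int \<lfloor>a/s\<rfloor> + 1 + of_int \<lceil>d/s\<rceil>"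
     "of_int \<lfloor>a/s\<rfloor> < of_int \<lfloor>b/s\<rfloor> + 1 + (of_int \<lceil>d/s\<rceil> :: real)" by linarith+
  then have "\<lfloor>b/s\<rfloor> < \<lfloor>a/s\<rfloor> + 1 + \<lceil>d/s\<rceil>" "\<lfloor>a/s\<rfloor> < \<lfloor>b/s\<rfloor> + 1 + \<lceil>d/s\<rceil>"
    by (metis of_int_1 of_int_add of_int_less_iff)+
  then show ?thesis by linarith
qed

lemma count_bound:
  fixes x :: "nat \<Rightarrow> real^2"
  assumes s: "s > 0" and d: "dn \<ge> 0"
    and R: "\<And>j. j < n \<Longrightarrow> norm (x j) \<le> R"
    and no: "\<And>k T. k \<in> Kset \<lceil>R/s\<rceil> \<Longrightarrow> T \<subseteq> {..<n} \<Longrightarrow> card T = 12 \<Longrightarrow> \<not> (\<forall>j\<in>T. x j \<in> cell s k)"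
  shows "card {j. j < n \<and> norm (x i - x j) \<le> dn} \<le> 11 * (nat (2 * \<lceil>dn/s\<rceil> + 1))\<^sup>2"
proof -
  define N1 where "N1 = \<lceil>dn/s\<rceil>"
  define B where "B = {fst (idx s (x i)) - N1 .. fst (idx s (x i)) + N1} \<times> {snd (idx s (x i)) - N1 .. snd (idx s (x i)) + N1}"
  have cnt: "card {j. j < n \<and> idx s (x j) = k} \<le> 11" for k
  proof (rule ccontr)
    assume "\<not> ?thesis"
    then have "12 \<le> card {j. j < n \<and> idx s (x j) = k}" by simp
    then obtain T where T: "T \<subseteq> {j. j < n \<and> idx s (x j) = k}" "card T = 12"
      by (meson obtain_subset_with_card_n)
    then obtain j0 where "j0 \<in> T" by fastforce
    with T have "j0 < n" "idx s (x j0) = k" by auto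
    then have kK: "k \<in> Kset \<lceil>R/s\<rceil>" using idx_in_K[OF s R] by metis
    have "\<forall>j\<in>T. x j \<in> cell s k" using T in_cell_idx[OF s] by force
    moreover have "T \<subseteq> {..<n}" using T by auto
    ultimately show False using no[OF kK _ T(2)] by blast
  qed
  have sub: "{j. j < n \<and> norm (x i - x j) \<le> dn} \<subseteq> (\<Union>k\<in>B. {j. j < n \<and> idx s (x j) = k})"
  proof
    fix j assume j: "j \<in> {j. j < n \<and> norm (x i - x j) \<le> dn}"
    have c1: "\<bar>x i $ 1 - x j $ 1\<bar> \<le> dn" using component_le_norm_cart[of "x i - x j" 1] j by auto
    have c2: "\<bar>x i $ 2 - x j $ 2\<bar> \<le> dn" using component_le_norm_cart[of "x i - x j" 2] j by auto
    have "idx s (x j) \<in> B"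
      using floor_close[OF s c1] floor_close[OF s c2]
      unfolding B_def idx_def N1_def by auto
    then show "j \<in> (\<Union>k\<in>B. {j. j < n \<and> idx s (x j) = k})" using j by auto
  qed
  have "card {j. j < n \<and> norm (x i - x j) \<le> dn} \<le> card (\<Union>k\<in>B. {j. j < n \<and> idx s (x j) = k})"
    by (rule card_mono[OF _ sub]) (auto simp: B_def)
  also have "\<dots> \<le> (\<Sum>k\<in>B. card {j. j < n \<and> idx s (x j) = k})"
    by (rule card_UN_le) (simp add: B_def)
  also have "\<dots> \<le> (\<Sum>k\<in>B. 11)" by (rule sum_mono) (use cnt in auto)
  also have "\<dots> = 11 * card B" by simp
  also have "card B = (nat (2 * N1 + 1))\<^sup>2"
    by (simp add: B_def card_cartesian_product power2_eq_square)
  finally show ?thesis by (simp add: N1_def mult.commute)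
qed
lemma det_spec:
  fixes x :: "nat \<Rightarrow> real^2"
  assumes s: "s > 0" and d: "dn \<ge> 0"
    and R: "\<And>j. j < n \<Longrightarrow> norm (x j) \<le> R"
    and no: "\<And>k T. k \<in> Kset \<lceil>R/s\<rceil> \<Longrightarrow> T \<subseteq> {..<n} \<Longrightarrow> card T = 12 \<Longrightarrow> \<not> (\<forall>j\<in>T. x j \<in> cell s k)"
  shows "spec_norm n (P_E E (Dbar_s dn x)) \<le> dn\<^sup>2 * real (11 * (nat (2 * \<lceil>dn/s\<rceil> + 1))\<^sup>2)"
proof (rule spec_bound[where Nr="\<lambda>i j. i \<noteq> j \<and> norm (x i - x j) \<le> dn"])
  fix i j assume "i < n" "j < n"
  show "\<bar>P_E E (Dbar_s dn x) i j\<bar> \<le> (if i \<noteq> j \<and> norm (x i - x j) \<le> dn then dn\<^sup>2 else 0)"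
    by (auto simp: P_E_def Dbar_s_def intro!: power_mono)
next
  fix i assume "i < n"
  have "card {j. j < n \<and> (i \<noteq> j \<and> norm (x i - x j) \<le> dn)} \<le> card {j. j < n \<and> norm (x i - x j) \<le> dn}"
    by (rule card_mono) auto
  also have "\<dots> \<le> 11 * (nat (2 * \<lceil>dn/s\<rceil> + 1))\<^sup>2" by (rule count_bound[OF s d R no])
  finally show "real (card {j. j < n \<and> (i \<noteq> j \<and> norm (x i - x j) \<le> dn)}) \<le> real (11 * (nat (2 * \<lceil>dn/s\<rceil> + 1))\<^sup>2)"
    by linarith
next
  fix j assume "j < n"
  have "card {i. i < n \<and> (i \<noteq> j \<and> norm (x i - x j) \<le> dn)} \<le> card {i. i < n \<and> norm (x j - x i) \<le> dn}"
    by (rule card_mono) (auto simp: norm_minus_commute)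
  also have "\<dots> \<le> 11 * (nat (2 * \<lceil>dn/s\<rceil> + 1))\<^sup>2" by (rule count_bound[OF s d R no])
  finally show "real (card {i. i < n \<and> (i \<noteq> j \<and> norm (x i - x j) \<le> dn)}) \<le> real (11 * (nat (2 * \<lceil>dn/s\<rceil> + 1))\<^sup>2)"
    by linarith
qed simp_all

lemma annulus_borel: "annulus r0 a \<in> sets borel"
  unfolding annulus_def by measurable

lemma annulus_sets: "annulus r0 a \<in> sets lborel"
  using annulus_borel by simp

lemma annulus_finite: "emeasure lborel (annulus r0 a) \<noteq> \<infinity>"
proof -
  have "bounded (annulus r0 a)"
    by (rule bounded_subset[OF bounded_cball[of 0 "r0 + a/2"]]) (auto simp: annulus_def)
  then have "emeasure lborel (annulus r0 a) < \<infinity>" by (rule emeasure_bounded_finite)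
  then show ?thesis by simp
qed

lemma annulus_lt: "emeasure lborel (annulus r0 a) < \<top>"
  using annulus_finite[of r0 a] by (simp add: less_top)

lemma content_box2:
  fixes l u :: "real^2"
  assumes "l$1 \<le> u$1" "l$2 \<le> u$2"
  shows "measure lborel (cbox l u) = (u$1 - l$1) * (u$2 - l$2)"
proof -
  have "cbox l u \<noteq> {}" using assms by (auto simp: interval_ne_empty_cart forall_2)
  then show ?thesis by (simp add: content_cbox_cart UNIV_2)
qed

lemma annulus_pos:
  assumes "r0 > 0" "0 < a" "a < 2 * r0"
  shows "measure lborel (annulus r0 a) > 0"
proof -
  define l :: "real^2" where "l = (\<chi> i. if i = 1 then r0 - a/4 else - a/4)"
  define u :: "real^2" where "u = (\<chi> i. if i = 1 then r0 + a/4 else a/4)"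
  have sub: "cbox l u \<subseteq> annulus r0 a"
  proof
    fix x assume "x \<in> cbox l u"
    then have x1: "r0 - a/4 \<le> x$1" "x$1 \<le> r0 + a/4" and x2: "-a/4 \<le> x$2" "x$2 \<le> a/4"
      by (auto simp: mem_box_cart l_def u_def forall_2)
    have "r0 - a/2 \<le> \<bar>x$1\<bar>" using x1 assms by linarith
    also have "\<dots> \<le> norm x" by (rule component_le_norm_cart)
    finally have 1: "r0 - a/2 \<le> norm x" .
    have "norm x \<le> \<bar>x$1\<bar> + \<bar>x$2\<bar>" using norm_le_l1_cart[of x] by (simp add: sum_2)
    also have "\<dots> \<le> r0 + a/2" using x1 x2 assms by linarith
    finally show "x \<in> annulus r0 a" using 1 by (simp add: annulus_def)
  qed
  have "measure lborel (cbox l u) = (a/2) * (a/2)"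
    using assms by (subst content_box2) (auto simp: l_def u_def)
  also have "\<dots> > 0" using assms by simp
  finally have "0 < measure lborel (cbox l u)" .
  also have "measure lborel (cbox l u) \<le> measure lborel (annulus r0 a)"
    by (rule measure_mono_fmeasurable[OF sub]) (auto simp: fmeasurable_def annulus_borel annulus_lt)
  finally show ?thesis .
qed

lemma annulus_nz:
  assumes "r0 > 0" "0 < a" "a < 2 * r0"
  shows "emeasure lborel (annulus r0 a) \<noteq> 0"
  using annulus_pos[OF assms] annulus_finite[of r0 a]
  by (metis measure_zero_top zero_ennreal.rep_eq order_less_irrefl enn2real_0 measure_def)

lemma prob_U:
  assumes "r0 > 0" "0 < a" "a < 2 * r0"
  shows "prob_space (uniform_measure lborel (annulus r0 a))"
  by (rule prob_space_uniform_measure[OF annulus_nz[OF assms] annulus_finite])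

lemma measure_cell:
  assumes "s > 0"
  shows "measure lborel (cell s k) = s\<^sup>2"
  unfolding cell_def using assms
  by (subst content_box2) (auto simp: power2_eq_square algebra_simps)

lemma U_cell:
  assumes "r0 > 0" "0 < a" "a < 2 * r0" "s > 0"
  shows "measure (uniform_measure lborel (annulus r0 a)) (cell s k) \<le> s\<^sup>2 / measure lborel (annulus r0 a)"
proof -
  have "measure (uniform_measure lborel (annulus r0 a)) (cell s k)
      = measure lborel (annulus r0 a \<inter> cell s k) / measure lborel (annulus r0 a)"
    by (rule measure_uniform_measure[OF annulus_nz[OF assms(1-3)] annulus_finite]) (simp add: cell_def)
  also have "\<dots> \<le> s\<^sup>2 / measure lborel (annulus r0 a)"
  proof (rule divide_right_mono)
    have "measure lborel (annulus r0 a \<inter> cell s k) \<le> measure lborel (cell s k)"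
      by (rule measure_mono_fmeasurable) (auto simp: cell_def annulus_borel)
    then show "measure lborel (annulus r0 a \<inter> cell s k) \<le> s\<^sup>2" using measure_cell[OF assms(4)] by simp
  qed simp
  finally show ?thesis .
qed

lemma U_out:
  assumes "r0 > 0" "0 < a" "a < 2 * r0"
  shows "measure (uniform_measure lborel (annulus r0 a)) (UNIV - annulus r0 a) = 0"
  by (subst measure_uniform_measure[OF annulus_nz[OF assms] annulus_finite]) (auto simp: annulus_borel)

definition Uann :: "real \<Rightarrow> real \<Rightarrow> (real^2) measure" where
  "Uann r0 a = uniform_measure lborel (annulus r0 a)"
definition M1 :: "real \<Rightarrow> real \<Rightarrow> nat \<Rightarrow> (nat \<Rightarrow> real^2) measure" where
  "M1 r0 a n = PiM {..<n} (\<lambda>_. Uann r0 a)"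
definition evA where
  "evA r0 a n s k T = prod_emb {..<n} (\<lambda>_. Uann r0 a) T (PiE T (\<lambda>_. cell s k))"
definition evB where
  "evB r0 a n j = prod_emb {..<n} (\<lambda>_. Uann r0 a) {j} (PiE {j} (\<lambda>_. UNIV - annulus r0 a))"
definition TT :: "nat \<Rightarrow> nat set set" where
  "TT n = {T. T \<subseteq> {..<n} \<and> card T = 12}"
definition Bad where
  "Bad r0 a n s = (\<Union>k\<in>Kset \<lceil>(r0+a/2)/s\<rceil>. \<Union>T\<in>TT n. evA r0 a n s k T) \<union> (\<Union>j\<in>{..<n}. evB r0 a n j)"

lemma finite_TT: "finite (TT n)"
  by (rule finite_subset[of _ "Pow {..<n}"]) (auto simp: TT_def)

lemma card_TT: "card (TT n) = n choose 12"
  using n_subsets[of "{..<n}" 12] by (simp add: TT_def)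

lemma finite_K: "finite (Kset N)" by (simp add: Kset_def)

lemma card_K: "card (Kset N) = (nat (2*N+1))\<^sup>2"
  by (simp add: Kset_def card_cartesian_product power2_eq_square)

context
  fixes r0 a :: real
  assumes r0: "r0 > 0" and a: "0 < a" "a < 2 * r0"
begin

lemma PPS: "product_prob_space (\<lambda>_::nat. Uann r0 a)"
  unfolding product_prob_space_def product_sigma_finite_def product_prob_space_axioms_def
  using prob_U[OF r0 a] by (auto simp: Uann_def prob_space_imp_sigma_finite)

lemma sets_evA: "T \<in> TT n \<Longrightarrow> evA r0 a n s k T \<in> sets (M1 r0 a n)"
  unfolding evA_def M1_def
  by (rule sets_PiM_I) (auto simp: TT_def Uann_def cell_def intro: finite_subset)

lemma sets_evB: "j < n \<Longrightarrow> evB r0 a n j \<in> sets (M1 r0 a n)"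
  unfolding evB_def M1_def
  by (rule sets_PiM_I) (auto simp: Uann_def annulus_borel)

lemma measure_evA:
  assumes "T \<in> TT n" "s > 0"
  shows "measure (M1 r0 a n) (evA r0 a n s k T) \<le> (s\<^sup>2 / measure lborel (annulus r0 a))^12"
proof -
  interpret P: product_prob_space "\<lambda>_. Uann r0 a" "{..<n}" by (rule PPS)
  have T: "T \<subseteq> {..<n}" "finite T" "card T = 12" using assms
    by (auto simp: TT_def intro: finite_subset)
  have "measure (M1 r0 a n) (evA r0 a n s k T) = (\<Prod>j\<in>T. measure (Uann r0 a) (cell s k))"
    unfolding evA_def M1_def
    by (rule P.measure_PiM_emb) (use T in \<open>auto simp: Uann_def cell_def\<close>)
  also have "\<dots> = (measure (Uann r0 a) (cell s k))^12" using T by simp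
  also have "\<dots> \<le> (s\<^sup>2 / measure lborel (annulus r0 a))^12"
    by (rule power_mono) (use U_cell[OF r0 a assms(2)] in \<open>auto simp: Uann_def\<close>)
  finally show ?thesis .
qed

lemma measure_evB:
  assumes "j < n"
  shows "measure (M1 r0 a n) (evB r0 a n j) = 0"
proof -
  interpret P: product_prob_space "\<lambda>_. Uann r0 a" "{..<n}" by (rule PPS)
  have "measure (M1 r0 a n) (evB r0 a n j) = (\<Prod>j\<in>{j}. measure (Uann r0 a) (UNIV - annulus r0 a))"
    unfolding evB_def M1_def
    by (rule P.measure_PiM_emb) (use assms in \<open>auto simp: Uann_def annulus_borel\<close>)
  also have "\<dots> = 0" using U_out[OF r0 a] by (simp add: Uann_def)
  finally show ?thesis .
qed

lemma sets_Bad: "Bad r0 a n s \<in> sets (M1 r0 a n)"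
  unfolding Bad_def
  by (intro sets.Un sets.finite_UN finite_K finite_TT sets_evA sets_evB) auto

lemma measure_Bad:
  assumes "s > 0"
  shows "measure (M1 r0 a n) (Bad r0 a n s)
     \<le> real (card (Kset \<lceil>(r0+a/2)/s\<rceil>)) * real (n choose 12) * (s\<^sup>2 / measure lborel (annulus r0 a))^12"
proof -
  let ?M = "M1 r0 a n" and ?K = "Kset \<lceil>(r0+a/2)/s\<rceil>" and ?u = "(s\<^sup>2 / measure lborel (annulus r0 a))^12"
  have "measure ?M (Bad r0 a n s) \<le> measure ?M (\<Union>k\<in>?K. \<Union>T\<in>TT n. evA r0 a n s k T) + measure ?M (\<Union>j\<in>{..<n}. evB r0 a n j)"
    unfolding Bad_def
    by (rule measure_Un_le) (intro sets.finite_UN finite_K finite_TT sets_evA sets_evB; auto)+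
  also have "measure ?M (\<Union>j\<in>{..<n}. evB r0 a n j) \<le> (\<Sum>j\<in>{..<n}. measure ?M (evB r0 a n j))"
    by (rule measure_UNION_le) (auto intro: sets_evB)
  also have "\<dots> = 0" by (simp add: measure_evB)
  also have "measure ?M (\<Union>k\<in>?K. \<Union>T\<in>TT n. evA r0 a n s k T) \<le> (\<Sum>k\<in>?K. measure ?M (\<Union>T\<in>TT n. evA r0 a n s k T))"
    by (rule measure_UNION_le) (auto intro!: finite_K sets.finite_UN finite_TT sets_evA)
  also have "\<dots> \<le> (\<Sum>k\<in>?K. \<Sum>T\<in>TT n. measure ?M (evA r0 a n s k T))"
    by (rule sum_mono, rule measure_UNION_le) (auto intro!: finite_TT sets_evA)
  also have "\<dots> \<le> (\<Sum>k\<in>?K. \<Sum>T\<in>TT n. ?u)"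
    by (intro sum_mono measure_evA assms)
  also have "\<dots> = real (card ?K) * real (n choose 12) * ?u"
    by (simp add: card_TT)
  finally show ?thesis by simp
qed

lemma good_props:
  assumes s: "s > 0" and x: "x \<in> space (M1 r0 a n) - Bad r0 a n s"
  shows "\<And>j. j < n \<Longrightarrow> norm (x j) \<le> r0 + a/2"
    and "\<And>k T. k \<in> Kset \<lceil>(r0+a/2)/s\<rceil> \<Longrightarrow> T \<subseteq> {..<n} \<Longrightarrow> card T = 12 \<Longrightarrow> \<not> (\<forall>j\<in>T. x j \<in> cell s k)"
proof -
  have sp: "x \<in> space (M1 r0 a n)" using x by auto
  then have ext: "x \<in> extensional {..<n}" and sp': "\<forall>i\<in>{..<n}. x i \<in> space (Uann r0 a)"
    by (auto simp: M1_def space_PiM PiE_def)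
  fix j assume j: "j < n"
  have "x \<notin> evB r0 a n j" using x j by (auto simp: Bad_def)
  then have "x j \<in> annulus r0 a"
    using ext sp' j by (auto simp: evB_def prod_emb_iff Uann_def)
  then show "norm (x j) \<le> r0 + a/2" by (simp add: annulus_def)
next
  fix k T assume k: "k \<in> Kset \<lceil>(r0+a/2)/s\<rceil>" and T: "T \<subseteq> {..<n}" "card T = 12"
  have sp: "x \<in> space (M1 r0 a n)" using x by auto
  then have ext: "x \<in> extensional {..<n}" and sp': "\<forall>i\<in>{..<n}. x i \<in> space (Uann r0 a)"
    by (auto simp: M1_def space_PiM PiE_def)
  have "T \<in> TT n" using T by (simp add: TT_def)
  then have "x \<notin> evA r0 a n s k T" using x k by (auto simp: Bad_def)
  then show "\<not> (\<forall>j\<in>T. x j \<in> cell s k)"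
    using ext sp' by (auto simp: evA_def prod_emb_iff)
qed
end

lemma L1: "filterlim (\<lambda>x::real. x * sqrt (ln x / x)) at_top at_top"
  by real_asymp

lemma L2: "((\<lambda>x::real. sqrt (ln x / x) / x) \<longlongrightarrow> 0) at_top"
  by real_asymp

lemma L3: "((\<lambda>x::real. x^4 * sqrt (ln x / x)^11) \<longlongrightarrow> 0) at_top"
  by real_asymp

lemma ev_nat: "eventually P (at_top::real filter) \<Longrightarrow> eventually (\<lambda>n::nat. P (real n)) sequentially"
  using filterlim_real_sequentially filterlim_iff by blast

lemma numA:
  fixes x R s dn A Kc Bc :: real
  assumes "0<x" "0<R" "0<s" "s \<le> R" "0<dn" "0<A" "s^2 = dn/x" "0 \<le> Kc" "Kc \<le> (2*R/s+3)^2"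
    "0 \<le> Bc" "Bc \<le> x^12" "25*R^2*x^4*dn^11 \<le> A^12"
  shows "Kc * Bc * (s^2/A)^12 \<le> 1/x^3"
proof -
  have "3 \<le> 3*R/s" using assms by (simp add: le_divide_eq)
  then have "2*R/s+3 \<le> 5*R/s" by simp
  moreover have "0 \<le> 2*R/s+3" using assms by simp
  ultimately have "(2*R/s+3)^2 \<le> (5*R/s)^2" by (rule power_mono)
  then have K: "Kc \<le> 25*R^2/s^2" using assms(9) by (simp add: power_divide power_mult_distrib)
  have "Kc * Bc * (s^2/A)^12 \<le> (25*R^2/s^2) * x^12 * (s^2/A)^12"
    by (intro mult_mono K assms) (use assms(1,2,3,5) in \<open>auto simp: zero_le_divide_iff\<close>)
  also have "\<dots> = 25*R^2 * x^12 * (s^2)^11 / A^12"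
    using assms by (simp add: power_divide field_simps)
  also have "\<dots> = 25*R^2 * x * dn^11 / A^12"
  proof -
    have ss: "(s^2)^11 = dn^11 / x^11" using assms(7) by (simp add: power_divide)
    have xx: "x^12 = x * x^11" using power_add[of x 1 11] by simp
    have "x^12 * (s^2)^11 = x * x^11 * (dn^11 / x^11)" by (simp only: ss xx)
    also have "\<dots> = x * dn^11" using assms(1) by simp
    finally have "x^12 * (s^2)^11 = x * dn^11" .
    then show ?thesis by (simp add: mult.assoc)
  qed
  also have "\<dots> \<le> 1/x^3"
  proof -
    have e: "25*R^2*x*dn^11 * x^3 = 25*R^2*x^4*dn^11" by algebra
    have "25*R^2*x*dn^11 * x^3 \<le> A^12" by (subst e) (rule assms(12))
    then have "x * (R\<^sup>2 * (x ^ 3 * (25 * dn ^ 11))) \<le> A ^ 12" by (simp add: mult_ac)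
    then show ?thesis using assms(1,6) by (simp add: field_simps)
  qed
  finally show ?thesis .
qed

lemma numB:
  fixes x dn s :: real
  assumes "0<x" "0<dn" "s = sqrt (dn/x)" "1 \<le> dn*x"
  shows "dn^2 * real (11 * (nat (2*\<lceil>dn/s\<rceil>+1))^2) \<le> 275 * dn^3 * x"
proof -
  define w where "w = sqrt (dn*x)"
  have w1: "1 \<le> w" using assms by (simp add: w_def)
  have sp: "s > 0" using assms by simp
  have "dn*x*(dn/x) = dn^2" using assms(1) by (simp add: power2_eq_square)
  then have "w * s = dn" using assms(2,3) by (simp add: w_def real_sqrt_mult[symmetric])
  then have ds: "dn/s = w" using sp by (simp add: field_simps)
  have "0 < dn/s" using ds w1 by simp
  then have "0 \<le> 2*\<lceil>dn/s\<rceil>+1" by linarith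
  then have e: "real (nat (2*\<lceil>dn/s\<rceil>+1)) = of_int (2*\<lceil>dn/s\<rceil>+1)" by simp
  have "of_int (2*\<lceil>dn/s\<rceil>+1) \<le> 2*w+3" using ds of_int_ceiling_le_add_one[of "dn/s"] by linarith
  also have "\<dots> \<le> 5*w" using w1 by simp
  finally have le: "real (nat (2*\<lceil>dn/s\<rceil>+1)) \<le> 5*w" by (simp add: e)
  have "(real (nat (2*\<lceil>dn/s\<rceil>+1)))^2 \<le> (5*w)^2" by (rule power_mono[OF le]) simp
  also have "\<dots> = 25*dn*x" using assms by (simp add: w_def power_mult_distrib)
  finally have "(real (nat (2*\<lceil>dn/s\<rceil>+1)))^2 \<le> 25*dn*x" .
  then have "dn^2 * (11 * (real (nat (2*\<lceil>dn/s\<rceil>+1)))^2) \<le> dn^2 * (11 * (25*dn*x))"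
    by (intro mult_left_mono) auto
  then show ?thesis by (simp add: power2_eq_square power3_eq_cube algebra_simps)
qed

theorem lemma3:
  fixes r0 a \<delta> p :: real
  assumes "r0 > 0" and "0 < a" and "a < 2 * r0"
    and "\<delta> > 0" and "0 < p" and "p \<le> 1"
  shows "\<exists>c. \<exists>N. \<forall>n \<ge> N.
    measure (model r0 a p n)
      {\<omega> \<in> space (model r0 a p n).
         spec_norm n (P_E (snd \<omega>) (Dbar_s (delta_n \<delta> r0 n) (fst \<omega>)))
           \<le> c * \<delta>^3 * (r0 + a)\<^sup>2 * (sqrt (ln (real n) / real n))^3 * p * real n}
    \<ge> 1 - real n powr (-3)"
proof -
  note r0 = assms(1) and aa = assms(2,3)
  define R where "R = r0 + a/2"
  define A where "A = measure lborel (annulus r0 a)"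
  have Apos: "A > 0" unfolding A_def by (rule annulus_pos[OF assms(1-3)])
  have Rpos: "R > 0" using assms unfolding R_def by simp
  have dr: "\<delta> * r0 > 0" using assms by simp
  define c where "c = 275 * r0^3 / ((r0+a)^2 * p)"
  define q where "q = (\<lambda>x::real. sqrt (ln x / x))"
  define Q where "Q = A^12 / (25*R^2*(\<delta>*r0)^11)"
  have Qpos: "Q > 0" unfolding Q_def using Apos Rpos dr by simp
  have e1: "eventually (\<lambda>x::real. 12 \<le> x) at_top" by (rule eventually_ge_at_top)
  have e2: "eventually (\<lambda>x::real. 1/(\<delta>*r0) \<le> x * q x) at_top"
    using L1 unfolding q_def filterlim_at_top by blast
  have e3: "eventually (\<lambda>x::real. q x / x < R^2/(\<delta>*r0)) at_top"
    using order_tendstoD(2)[OF L2, of "R^2/(\<delta>*r0)"] Rpos dr unfolding q_def by simp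
  have e4: "eventually (\<lambda>x::real. x^4 * q x^11 < Q) at_top"
    using order_tendstoD(2)[OF L3 Qpos] unfolding q_def by simp
  have "eventually (\<lambda>x::real. 12 \<le> x \<and> 1/(\<delta>*r0) \<le> x * q x \<and> q x / x < R^2/(\<delta>*r0) \<and> x^4 * q x^11 < Q) at_top"
    using e1 e2 e3 e4 by eventually_elim auto
  from ev_nat[OF this] obtain N where N: "\<And>n. n \<ge> N \<Longrightarrow>
      12 \<le> real n \<and> 1/(\<delta>*r0) \<le> real n * q (real n) \<and> q (real n) / real n < R^2/(\<delta>*r0)
      \<and> real n^4 * q (real n)^11 < Q"
    unfolding eventually_sequentially by blast
  show ?thesis
  proof (intro exI allI impI)
    fix n assume "N \<le> n"
    note Nn = N[OF this]
    define x where "x = real n"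
    have x12: "12 \<le> x" using Nn by (simp add: x_def)
    have n12: "12 \<le> n" using x12 by (simp add: x_def)
    have xpos: "x > 0" using x12 by simp
    have qpos: "q x > 0" using x12 by (simp add: q_def)
    define dn where "dn = delta_n \<delta> r0 n"
    have dn_eq: "dn = \<delta> * r0 * q x" by (simp add: dn_def delta_n_def q_def x_def)
    have dnpos: "dn > 0" using dn_eq dr qpos by simp
    define s where "s = sqrt (dn / x)"
    have spos: "s > 0" using dnpos xpos by (simp add: s_def)
    have s2: "s^2 = dn / x" using dnpos xpos by (simp add: s_def)
    have dnx: "1 \<le> dn * x"
    proof -
      have "1/(\<delta>*r0) \<le> x * q x" using Nn by (simp add: x_def)
      then have "1 \<le> (\<delta>*r0) * (x * q x)" using dr by (simp add: field_simps)
      then show ?thesis by (simp add: dn_eq mult_ac)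
    qed
    have sR: "s \<le> R"
    proof -
      have "q x / x < R^2/(\<delta>*r0)" using Nn by (simp add: x_def)
      then have "(\<delta>*r0) * (q x / x) \<le> R^2" using dr by (simp add: field_simps)
      then have "dn / x \<le> R^2" by (simp add: dn_eq)
      then have "s \<le> sqrt (R^2)" unfolding s_def by (rule real_sqrt_le_mono)
      then show ?thesis using Rpos by simp
    qed
    define tgt where "tgt = c * \<delta>^3 * (r0 + a)\<^sup>2 * (sqrt (ln (real n) / real n))^3 * p * real n"
    have tgt_eq: "tgt = 275 * dn^3 * x"
      using assms unfolding tgt_def c_def dn_eq q_def x_def
      by (simp add: field_simps power_mult_distrib)
    have tgt0: "tgt \<ge> 0" using tgt_eq dnpos xpos by simp
    define M2 where "M2 = PiM ({..<n} \<times> {..<n}) (\<lambda>_::nat\<times>nat. measure_pmf (bernoulli_pmf p))"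
    have mdl: "model r0 a p n = M1 r0 a n \<Otimes>\<^sub>M M2"
      by (simp add: model_def M1_def Uann_def M2_def)
    interpret P1: prob_space "M1 r0 a n"
      unfolding M1_def by (rule prob_space_PiM) (simp add: Uann_def prob_U[OF assms(1-3)])
    interpret P2: prob_space M2
      unfolding M2_def by (rule prob_space_PiM) (simp add: prob_space_measure_pmf)
    interpret PP: pair_prob_space "M1 r0 a n" M2 ..
    define B where "B = Bad r0 a n s \<times> space M2"
    have Bsets: "B \<in> sets (M1 r0 a n \<Otimes>\<^sub>M M2)"
      unfolding B_def by (intro pair_measureI sets_Bad[OF assms(1-3)]) auto
    have "emeasure (M1 r0 a n \<Otimes>\<^sub>M M2) B = emeasure (M1 r0 a n) (Bad r0 a n s) * emeasure M2 (space M2)"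
      unfolding B_def by (rule P2.emeasure_pair_measure_Times) (auto intro: sets_Bad[OF assms(1-3)])
    then have mB: "measure (M1 r0 a n \<Otimes>\<^sub>M M2) B = measure (M1 r0 a n) (Bad r0 a n s)"
      by (simp add: measure_def P2.emeasure_space_1)
    define G where "G = {\<omega> \<in> space (model r0 a p n).
         spec_norm n (P_E (snd \<omega>) (Dbar_s (delta_n \<delta> r0 n) (fst \<omega>))) \<le> tgt}"
    have Gsets: "G \<in> sets (M1 r0 a n \<Otimes>\<^sub>M M2)"
      unfolding G_def mdl[symmetric] by (rule sets_spec[OF tgt0])
    have sub: "space (M1 r0 a n \<Otimes>\<^sub>M M2) - B \<subseteq> G"
    proof
      fix \<omega> assume w: "\<omega> \<in> space (M1 r0 a n \<Otimes>\<^sub>M M2) - B"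
      then have fw: "fst \<omega> \<in> space (M1 r0 a n) - Bad r0 a n s"
        by (cases \<omega>) (auto simp: B_def space_pair_measure)
      have "spec_norm n (P_E (snd \<omega>) (Dbar_s dn (fst \<omega>))) \<le> dn\<^sup>2 * real (11 * (nat (2 * \<lceil>dn/s\<rceil> + 1))\<^sup>2)"
        by (rule det_spec[OF spos less_imp_le[OF dnpos]])
           (use good_props[OF assms(1-3) spos fw] in \<open>auto\<close>)
      also have "\<dots> \<le> 275 * dn^3 * x"
        by (rule numB[OF xpos dnpos s_def dnx])
      finally show "\<omega> \<in> G" using w tgt_eq by (simp add: G_def mdl dn_def)
    qed
    have "measure (M1 r0 a n) (Bad r0 a n s)
        \<le> real (card (Kset \<lceil>(r0+a/2)/s\<rceil>)) * real (n choose 12) * (s\<^sup>2 / A)^12"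
      unfolding A_def by (rule measure_Bad[OF assms(1-3) spos])
    also have "\<dots> \<le> 1/x^3"
    proof (rule numA[OF xpos Rpos spos sR dnpos Apos s2])
      have "0 < R/s" using Rpos spos by simp
      then have "0 \<le> 2*\<lceil>R/s\<rceil>+1" by linarith
      then have ce: "real (nat (2*\<lceil>R/s\<rceil>+1)) = of_int (2*\<lceil>R/s\<rceil>+1)" by simp
      have "2*R/s = 2*(R/s)" by simp
      then have "of_int (2*\<lceil>R/s\<rceil>+1) \<le> 2*R/s+3" using of_int_ceiling_le_add_one[of "R/s"] by linarith
      moreover have "0 \<le> real (nat (2*\<lceil>R/s\<rceil>+1))" by simp
      ultimately have "(real (nat (2*\<lceil>R/s\<rceil>+1)))^2 \<le> (2*R/s+3)^2"
        using ce by (intro power_mono) auto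
      then show "real (card (Kset \<lceil>(r0+a/2)/s\<rceil>)) \<le> (2*R/s+3)^2"
        by (simp add: card_K R_def)
      show "real (n choose 12) \<le> x^12"
        using binomial_le_pow[OF n12] by (simp add: x_def flip: of_nat_power)
      have "x^4 * q x^11 < Q" using Nn by (simp add: x_def)
      moreover have D: "0 < 25*R^2*(\<delta>*r0)^11" using Rpos dr by simp
      ultimately have "(x^4 * q x^11) * (25*R^2*(\<delta>*r0)^11) < A^12"
        using pos_less_divide_eq[OF D] unfolding Q_def by blast
      then have "25*R^2*(\<delta>*r0)^11 * (x^4 * q x^11) \<le> A^12" by (simp add: mult.commute)
      then show "25*R^2*x^4*dn^11 \<le> A^12"
        by (simp add: dn_eq power_mult_distrib mult_ac)
    qed simp_all
    also have "1/x^3 = real n powr (-3)"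
      using xpos by (simp add: x_def powr_minus powr_realpow divide_inverse)
    finally have mBad: "measure (M1 r0 a n) (Bad r0 a n s) \<le> real n powr (-3)" .
    have "1 - real n powr (-3) \<le> 1 - measure (M1 r0 a n \<Otimes>\<^sub>M M2) B" using mB mBad by simp
    also have "\<dots> = measure (M1 r0 a n \<Otimes>\<^sub>M M2) (space (M1 r0 a n \<Otimes>\<^sub>M M2) - B)"
      by (rule PP.P.prob_compl[symmetric, OF Bsets])
    also have "\<dots> \<le> measure (M1 r0 a n \<Otimes>\<^sub>M M2) G"
      by (rule PP.P.finite_measure_mono[OF sub Gsets])
    finally show "1 - real n powr (-3) \<le> measure (model r0 a p n)
      {\<omega> \<in> space (model r0 a p n).
         spec_norm n (P_E (snd \<omega>) (Dbar_s (delta_n \<delta> r0 n) (fst \<omega>)))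
           \<le> c * \<delta>^3 * (r0 + a)\<^sup>2 * (sqrt (ln (real n) / real n))^3 * p * real n}"
      unfolding G_def tgt_def mdl .
  qed
qed


end
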